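(* Let $q$ be a prime power and $n=q^4-1$. For $0\le a<q-1$ and $0\le b<q$, $$[(a,b,a,b),(a+1,b,a+1,b)]_M=\{(i,j,a,b):\ 0\le i<q \text{ and } b<j<q,\ \text{or}\ a<i<q \text{ and } j=b\}.$$ For $0\le b\le q-2$, $$[(q-1,b,q-1,b),(0,b+1,0,b+1)]_M=\{(i,j,q-1,b):\ 0\le i<q \text{ and } b<j<q\}.$$
   Context: Identify $\mathbb{Z}_n$ with $\{0,\ldots,n-1\}$. The $q$-adic 4-tuple $(a_0,a_1,a_2,a_3)$ denotes the integer $a_0+a_1q+a_2q^2+a_3q^3$ with $0\le a_i<q$. The cyclotomic coset of $x$ with respect to $q^2$ is $I_x=\{x,\,q^2x\bmod n\}$; $x$ is its minimal representative if it is its least element. The cosets of cardinality one are exactly those of elements $(a,b,a,b)$. An interlude is the set of integers lying strictly between two consecutive elements of cardinality-one cosets that are minimal representatives of cosets of cardinality $2$: for $0\le a<q-1$, $0\le b<q$, $[(a,b,a,b),(a+1,b,a+1,b)]_M$ is the set of integers $x$ with $(a,b,a,b)<x<(a+1,b,a+1,b)$ that are minimal representatives of a coset of cardinality $2$; for $0\le b\le q-2$, $[(q-1,b,q-1,b),(0,b+1,0,b+1)]_M$ is the set of integers $x$ with $(q-1,b,q-1,b)<x<(0,b+1,0,b+1)$ and $x<q^2x \bmod n$. *)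

theory Defs
  imports "HOL-Computational_Algebra.Primes"
begin

definition prime_power :: "nat \<Rightarrow> bool" where
  "prime_power q \<longleftrightarrow> (\<exists>p k. prime p \<and> k > 0 \<and> q = p ^ k)"

definition qadic4 :: "nat \<Rightarrow> nat \<Rightarrow> nat \<Rightarrow> nat \<Rightarrow> nat \<Rightarrow> nat" where
  "qadic4 q a0 a1 a2 a3 = a0 + a1 * q + a2 * q^2 + a3 * q^3"

definition cyc_coset :: "nat \<Rightarrow> nat \<Rightarrow> nat \<Rightarrow> nat set" where
  "cyc_coset q n x = {x, (q^2 * x) mod n}"

definition min_rep :: "nat \<Rightarrow> nat \<Rightarrow> nat \<Rightarrow> bool" where
  "min_rep q n x \<longleftrightarrow> x = Min (cyc_coset q n x)"

definition interlude1 :: "nat \<Rightarrow> nat \<Rightarrow> nat \<Rightarrow> nat set" where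
  "interlude1 q a b = {x. x < q^4 - 1 \<and> qadic4 q a b a b < x \<and> x < qadic4 q (a+1) b (a+1) b
      \<and> min_rep q (q^4 - 1) x \<and> card (cyc_coset q (q^4 - 1) x) = 2}"

definition interlude2 :: "nat \<Rightarrow> nat \<Rightarrow> nat set" where
  "interlude2 q b = {x. x < q^4 - 1 \<and> qadic4 q (q-1) b (q-1) b < x \<and> x < qadic4 q 0 (b+1) 0 (b+1)
      \<and> x < (q^2 * x) mod (q^4 - 1)}"

end

theory Submission imports Defs begin

lemma swap_eq:
  fixes Q x :: nat assumes "2 \<le> Q" "x < Q*Q - 1"
  shows "(Q*x) mod (Q*Q-1) = x div Q + Q*(x mod Q)"
proof -
  define L H where "L = x mod Q" and "H = x div Q"
  have x: "x = L + Q*H" unfolding L_def H_def by simp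
  have LQ: "L < Q" using assms unfolding L_def by simp
  have HQ: "H < Q" using assms unfolding H_def by (simp add: less_mult_imp_div_less)
  have lt: "Q*L + H < Q*Q - 1"
  proof (cases "H = Q - 1")
    case True
    have "L < Q - 1"
    proof (rule ccontr)
      assume "\<not> L < Q - 1"
      then have "Q - 1 + Q*(Q-1) \<le> x" using x True by simp
      moreover have "Q - 1 + Q*(Q-1) = Q*Q - 1" using assms by (simp add: diff_mult_distrib2)
      ultimately show False using assms by linarith
    qed
    then have "L \<le> Q - 2" by linarith
    then have "Q*L \<le> Q*(Q-2)" by simp
    moreover have "Q*(Q-2) + (Q-1) < Q*Q - 1" using assms
      by (simp add: diff_mult_distrib2) 
    ultimately show ?thesis using True by linarith
  next
    case False
    then have "H \<le> Q - 2" using HQ by linarith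
    moreover have "Q*L \<le> Q*(Q-1)" using LQ by simp
    moreover have "Q*(Q-1) + (Q-2) < Q*Q - 1" using assms
      by (simp add: diff_mult_distrib2)
    ultimately show ?thesis by linarith
  qed
  have "Q*x = (Q*L + H) + (Q*Q-1)*H"
  proof -
    have a: "(Q*Q-1)*H = Q*Q*H - H" by (simp add: diff_mult_distrib)
    have b: "H \<le> Q*Q*H" using assms by simp
    have c: "Q*x = Q*L + Q*Q*H" unfolding x by (simp add: algebra_simps)
    show ?thesis using a b c by linarith
  qed
  then have "(Q*x) mod (Q*Q-1) = (Q*L+H) mod (Q*Q-1)" by simp
  also have "\<dots> = Q*L + H" using lt by simp
  finally show ?thesis unfolding L_def H_def by simp
qed

lemma lt_swap:
  fixes Q x :: nat assumes "2 \<le> Q" "x < Q*Q - 1"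
  shows "x < (Q*x) mod (Q*Q-1) \<longleftrightarrow> x div Q < x mod Q"
proof -
  define L H where "L = x mod Q" and "H = x div Q"
  have x: "x = L + Q*H" unfolding L_def H_def by simp
  have s: "(Q*x) mod (Q*Q-1) = H + Q*L" using swap_eq[OF assms] unfolding L_def H_def .
  have "L + Q*H < H + Q*L \<longleftrightarrow> int L + int Q * int H < int H + int Q * int L" by (simp only: of_nat_add [symmetric] of_nat_mult [symmetric] of_nat_less_iff)
  also have "\<dots> \<longleftrightarrow> (int Q - 1) * int H < (int Q - 1) * int L" by (simp add: algebra_simps)
  also have "\<dots> \<longleftrightarrow> H < L" using assms by (subst mult_less_cancel_left_pos) auto
  finally show ?thesis using x s unfolding L_def H_def by simp
qed

lemma block:
  fixes Q c :: nat assumes "2 \<le> Q" "c + 1 < Q"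
  shows "{x. x < Q*Q-1 \<and> c*(1+Q) < x \<and> x < (c+1)*(1+Q) \<and> x div Q < x mod Q}
       = {L + Q*c | L. c < L \<and> L < Q}"
proof (intro set_eqI iffI)
  fix x assume "x \<in> {x. x < Q*Q-1 \<and> c*(1+Q) < x \<and> x < (c+1)*(1+Q) \<and> x div Q < x mod Q}"
  then have h: "x < Q*Q-1" "c*(1+Q) < x" "x < (c+1)*(1+Q)" "x div Q < x mod Q" by auto
  define L H where "L = x mod Q" and "H = x div Q"
  have x: "x = L + Q*H" unfolding L_def H_def by simp
  have LQ: "L < Q" using assms unfolding L_def by simp
  have "H = c"
  proof (rule ccontr)
    assume "H \<noteq> c"
    then consider "c < H" | "H < c" by linarith
    then show False
    proof cases
      case 1
      then have "Q*(c+1) \<le> Q*H" by (intro mult_le_mono2) simp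
      moreover have "c + 1 < L" using 1 h(4) unfolding L_def H_def by linarith
      ultimately show False using h(3) x by (simp add: algebra_simps)
    next
      case 2
      then have "Q*(H+1) \<le> Q*c" by (intro mult_le_mono2) simp
      then have "x < Q*c" using x LQ by (simp add: algebra_simps)
      then show False using h(2) by (simp add: algebra_simps)
    qed
  qed
  moreover have "c < L" using h(4) \<open>H = c\<close> unfolding L_def H_def by simp
  ultimately show "x \<in> {L + Q*c | L. c < L \<and> L < Q}" using x LQ by auto
next
  fix x assume "x \<in> {L + Q*c | L. c < L \<and> L < Q}"
  then obtain L where x: "x = L + Q*c" and L: "c < L" "L < Q" by auto
  have d: "x div Q = c" "x mod Q = L" using x L by auto
  have "Q*c \<le> Q*(Q-2)" using assms by simp
  moreover have "Q*(Q-2) + Q < Q*Q - 1 + 1" using assms by (simp add: diff_mult_distrib2)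
  ultimately have "x < Q*Q-1" using x L by linarith
  moreover have "c*(1+Q) < x" using x L by (simp add: algebra_simps)
  moreover have "x < (c+1)*(1+Q)" using x L by (simp add: algebra_simps)
  ultimately show "x \<in> {x. x < Q*Q-1 \<and> c*(1+Q) < x \<and> x < (c+1)*(1+Q) \<and> x div Q < x mod Q}"
    using d L by auto
qed

lemma digits:
  fixes q a b :: nat assumes "a < q" "b < q"
  shows "{i + j*q | i j. (i < q \<and> b < j \<and> j < q) \<or> (a < i \<and> i < q \<and> j = b)}
       = {L. a + b*q < L \<and> L < q*q}"
proof (intro set_eqI iffI)
  fix x assume "x \<in> {i + j*q | i j. (i < q \<and> b < j \<and> j < q) \<or> (a < i \<and> i < q \<and> j = b)}"
  then obtain i j where x: "x = i + j*q" and c: "(i < q \<and> b < j \<and> j < q) \<or> (a < i \<and> i < q \<and> j = b)" by auto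
  from c show "x \<in> {L. a + b*q < L \<and> L < q*q}"
  proof
    assume h: "i < q \<and> b < j \<and> j < q"
    then have "(b+1)*q \<le> j*q" "(j+1)*q \<le> q*q" by (intro mult_le_mono1; simp)+
    then show ?thesis using x h assms by (simp add: algebra_simps)
  next
    assume h: "a < i \<and> i < q \<and> j = b"
    have "(b+1)*q \<le> q*q" using assms by (intro mult_le_mono1) simp
    then show ?thesis using x h by (simp add: algebra_simps)
  qed
next
  fix x assume "x \<in> {L. a + b*q < L \<and> L < q*q}"
  then have h: "a + b*q < x" "x < q*q" by auto
  define i j where "i = x mod q" and "j = x div q"
  have x: "x = i + j*q" unfolding i_def j_def by simp
  have iq: "i < q" using assms unfolding i_def by simp
  have jq: "j < q" using h unfolding j_def by (simp add: less_mult_imp_div_less)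
  have "b \<le> j"
  proof (rule ccontr)
    assume "\<not> b \<le> j" then have "(j+1)*q \<le> b*q" by (intro mult_le_mono1) simp
    then show False using x iq h by (simp add: algebra_simps)
  qed
  then consider "b < j" | "j = b" by linarith
  then show "x \<in> {i + j*q | i j. (i < q \<and> b < j \<and> j < q) \<or> (a < i \<and> i < q \<and> j = b)}"
  proof cases
    case 1 then show ?thesis using x iq jq by blast
  next
    case 2 then have "a < i" using x h by simp
    then show ?thesis using x iq 2 by blast
  qed
qed

lemma minrep_iff:
  fixes q x :: nat assumes "2 \<le> q" "x < q^4 - 1"
  shows "(min_rep q (q^4-1) x \<and> card (cyc_coset q (q^4-1) x) = 2) \<longleftrightarrow> x div q^2 < x mod q^2"
proof -
  have Q: "q^4 = q^2*q^2" by algebra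
  have "q \<le> q*q" using assms(1) by simp
  then have Q2: "2 \<le> q^2" using assms(1) unfolding power2_eq_square by linarith
  define y where "y = (q^2 * x) mod (q^4 - 1)"
  have xl: "x < q^2*q^2 - 1" using assms(2) unfolding Q .
  have "x < y \<longleftrightarrow> x div q^2 < x mod q^2" unfolding y_def Q by (rule lt_swap[OF Q2 xl])
  moreover have "(min_rep q (q^4-1) x \<and> card (cyc_coset q (q^4-1) x) = 2) \<longleftrightarrow> x < y"
    unfolding min_rep_def cyc_coset_def y_def[symmetric] by (cases "x = y") (auto simp: min_def)
  ultimately show ?thesis by simp
qed

lemma qadic_split: "qadic4 q i j a b = (i + j*q) + q^2*(a + b*q)"
  unfolding qadic4_def by (simp add: algebra_simps power2_eq_square power3_eq_cube)

lemma rhs_form: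
  fixes q a b :: nat assumes "a < q" "b < q"
  shows "{qadic4 q i j a b | i j. (i < q \<and> b < j \<and> j < q) \<or> (a < i \<and> i < q \<and> j = b)}
       = {L + q^2*(a+b*q) | L. a + b*q < L \<and> L < q^2}"
proof -
  have "{qadic4 q i j a b | i j. (i < q \<and> b < j \<and> j < q) \<or> (a < i \<and> i < q \<and> j = b)}
      = (\<lambda>L. L + q^2*(a+b*q)) ` {i + j*q | i j. (i < q \<and> b < j \<and> j < q) \<or> (a < i \<and> i < q \<and> j = b)}"
    unfolding qadic_split by blast
  also have "\<dots> = (\<lambda>L. L + q^2*(a+b*q)) ` {L. a + b*q < L \<and> L < q*q}" using digits[OF assms] by simp
  finally show ?thesis by (auto simp: power2_eq_square)
qed

theorem mainTheorem13:
  fixes q :: nat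
  assumes "prime_power q"
  shows "(\<forall>a b. a < q - 1 \<and> b < q \<longrightarrow>
            interlude1 q a b =
              {qadic4 q i j a b | i j. (i < q \<and> b < j \<and> j < q) \<or> (a < i \<and> i < q \<and> j = b)})
       \<and> (\<forall>b. b \<le> q - 2 \<longrightarrow>
            interlude2 q b = {qadic4 q i j (q - 1) b | i j. i < q \<and> b < j \<and> j < q})"
proof -
  obtain p k where pk: "prime p" "k > 0" "q = p^k" using assms unfolding prime_power_def by blast
  have "p \<le> q" using pk self_le_power[of p k] prime_ge_1_nat[OF pk(1)] by simp
  then have q2: "2 \<le> q" using prime_ge_2_nat[OF pk(1)] by linarith
  define Q where "Q = q^2"
  have "q \<le> q*q" using q2 by simp
  then have Q2: "2 \<le> Q" unfolding Q_def using q2 unfolding power2_eq_square by linarith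
  have Q4: "q^4 = Q*Q" unfolding Q_def by algebra
  have qq: "q*q = Q" unfolding Q_def by (simp add: power2_eq_square)
  have qsq: "q^2 = Q" unfolding Q_def ..
  have qQ: "q \<le> Q" using q2 qq by (metis le_square)
  have part1: "interlude1 q a b =
              {qadic4 q i j a b | i j. (i < q \<and> b < j \<and> j < q) \<or> (a < i \<and> i < q \<and> j = b)}"
    if ab: "a < q - 1" "b < q" for a b
  proof -
    define c where "c = a + b*q"
    have "b*q \<le> (q-1)*q" using ab by (intro mult_le_mono1) simp
    moreover have "(q-1)*q + q = Q" using q2 qq qQ by (simp add: diff_mult_distrib)
    ultimately have c1: "c + 1 < Q" unfolding c_def using ab by linarith
    have e1: "qadic4 q a b a b = c*(1+Q)" unfolding qadic_split c_def Q_def by (simp add: algebra_simps)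
    have e2: "qadic4 q (a+1) b (a+1) b = (c+1)*(1+Q)" unfolding qadic_split c_def Q_def by (simp add: algebra_simps)
    have "interlude1 q a b = {x. x < Q*Q-1 \<and> c*(1+Q) < x \<and> x < (c+1)*(1+Q) \<and> x div Q < x mod Q}"
      using minrep_iff[OF q2] unfolding interlude1_def e1 e2 Q4 qsq by auto
    also have "\<dots> = {L + Q*c | L. c < L \<and> L < Q}" by (rule block[OF Q2 c1])
    also have "\<dots> = {qadic4 q i j a b | i j. (i < q \<and> b < j \<and> j < q) \<or> (a < i \<and> i < q \<and> j = b)}"
      using rhs_form[of a q b] ab unfolding c_def qsq by simp
    finally show ?thesis .
  qed
  have part2: "interlude2 q b = {qadic4 q i j (q - 1) b | i j. i < q \<and> b < j \<and> j < q}"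
    if b: "b \<le> q - 2" for b
  proof -
    define c where "c = (q-1) + b*q"
    have "(b+1)*q \<le> (q-1)*q" using b q2 by (intro mult_le_mono1) simp
    moreover have "(q-1)*q + q = Q" using q2 qq qQ by (simp add: diff_mult_distrib)
    moreover have "c + 1 = (b+1)*q" unfolding c_def using q2 by simp
    ultimately have c1: "c + 1 < Q" by linarith
    have e1: "qadic4 q (q-1) b (q-1) b = c*(1+Q)" unfolding qadic_split qsq c_def[symmetric] by (simp add: algebra_simps)
    have e2: "qadic4 q 0 (b+1) 0 (b+1) = (c+1)*(1+Q)" unfolding qadic_split c_def Q_def using q2 by (simp add: algebra_simps)
    have "interlude2 q b = {x. x < Q*Q-1 \<and> c*(1+Q) < x \<and> x < (c+1)*(1+Q) \<and> x div Q < x mod Q}"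
      using lt_swap[OF Q2] unfolding interlude2_def e1 e2 Q4 qsq by auto
    also have "\<dots> = {L + Q*c | L. c < L \<and> L < Q}" by (rule block[OF Q2 c1])
    also have "\<dots> = {qadic4 q i j (q-1) b | i j. (i < q \<and> b < j \<and> j < q) \<or> (q-1 < i \<and> i < q \<and> j = b)}"
      using rhs_form[of "q-1" q b] b q2 unfolding c_def qsq by simp
    also have "\<dots> = {qadic4 q i j (q - 1) b | i j. i < q \<and> b < j \<and> j < q}" by auto
    finally show ?thesis .
  qed
  show ?thesis using part1 part2 by blast
qed

end
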